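(* (1) Let $p\ge 1$ be an integer and $\delta>0$. There exists $\epsilon>0$, depending only on $\delta$ and $p$, such that every flag $(d-1)$-dimensional simplicial complex $\Gamma$ with $n$ vertices satisfying $\mathrm{gr}_{p-1}(\Gamma)>2p$ and $d<(1-\delta)n$ has $f_1(\Gamma)<\binom{n}{2}-\epsilon n^2$. (2) For every $\epsilon'>0$ there exists $\delta'>0$ such that every $(d-1)$-dimensional simplicial complex $\Gamma$ with $n$ vertices satisfying $\mathrm{gr}_1(\Gamma)>4$ and $d<\delta' n$ has $f_1(\Gamma)<\epsilon' n^2$.
   Context: A simplicial complex $\Gamma$ on a finite vertex set $V=V(\Gamma)$ is a family of subsets of $V$ (faces) closed under taking subsets; its dimension is $\max\{|F|:F\in\Gamma\}-1$; $f_1(\Gamma)$ is the number of 2-element faces (edges). $\Gamma$ is flag if every vertex set all of whose 2-element subsets are faces is itself a face. For $W\subseteq V$, $\Gamma[W]=\{F\in\Gamma:F\subseteq W\}$. For a face $F$ (possibly empty), $\mathrm{lk}_\Gamma(F)=\{G\setminus F: F\subseteq G\in\Gamma\}$. Fix a field $\mathbf{k}$; $\tilde H_i(\cdot;\mathbf{k})$ is reduced simplicial homology. The $(p-1)$-girth is $\mathrm{gr}_{p-1}(\Gamma)=\min\{|W|: W\subseteq V(\Gamma),\ \tilde H_{p-1}(\mathrm{lk}_\Gamma(F)[W];\mathbf{k})\neq 0 \text{ for some face } F\in\Gamma \text{ (including } F=\emptyset)\}$, or $\infty$ if none exists. *)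

theory Defs
  imports Complex_Main "HOL-Library.Extended_Nat"
begin

definition simplicial_complex :: "nat set set \<Rightarrow> bool" where
  "simplicial_complex K \<longleftrightarrow> finite K \<and> K \<noteq> {} \<and> (\<forall>F\<in>K. \<forall>G. G \<subseteq> F \<longrightarrow> G \<in> K)"

definition verts :: "nat set set \<Rightarrow> nat set" where
  "verts K = \<Union>K"

text \<open>d = max face cardinality, so the complex has dimension d - 1.\<close>
definition cdim :: "nat set set \<Rightarrow> nat" where
  "cdim K = Max (card ` K)"

definition f1 :: "nat set set \<Rightarrow> nat" where
  "f1 K = card {F \<in> K. card F = 2}"

definition flag :: "nat set set \<Rightarrow> bool" where
  "flag K \<longleftrightarrow> (\<forall>W. W \<subseteq> verts K \<longrightarrow>
      (\<forall>u\<in>W. \<forall>v\<in>W. u \<noteq> v \<longrightarrow> {u, v} \<in> K) \<longrightarrow> W \<in> K)"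

definition induced :: "nat set set \<Rightarrow> nat set \<Rightarrow> nat set set" where
  "induced K W = {F \<in> K. F \<subseteq> W}"

definition link :: "nat set set \<Rightarrow> nat set \<Rightarrow> nat set set" where
  "link K F = {G - F | G. G \<in> K \<and> F \<subseteq> G}"

text \<open>A chain of degree i is supported on faces with i+1 vertices (the empty face has
  degree -1, giving the augmented = reduced chain complex). Faces are oriented by
  the natural order on vertices: the boundary of [v_0,...,v_i] is
  sum_j (-1)^j [v_0,..,v_j omitted,..,v_i].\<close>

definition chain :: "nat set set \<Rightarrow> nat \<Rightarrow> (nat set \<Rightarrow> 'k::field) \<Rightarrow> bool" where
  "chain K i c \<longleftrightarrow> (\<forall>F. c F \<noteq> 0 \<longrightarrow> F \<in> K \<and> card F = Suc i)"

definition bd :: "nat set set \<Rightarrow> (nat set \<Rightarrow> 'k::field) \<Rightarrow> nat set \<Rightarrow> 'k" where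
  "bd K c G = (\<Sum>v \<in> verts K - G.
      if insert v G \<in> K then (-1) ^ card {u \<in> G. u < v} * c (insert v G) else 0)"

definition homology_nonzero :: "'k::field itself \<Rightarrow> nat set set \<Rightarrow> nat \<Rightarrow> bool" where
  "homology_nonzero _ K i \<longleftrightarrow>
     (\<exists>c :: nat set \<Rightarrow> 'k. chain K i c \<and> bd K c = (\<lambda>_. 0) \<and>
        \<not> (\<exists>b :: nat set \<Rightarrow> 'k. chain K (Suc i) b \<and> bd K b = c))"

text \<open>The i-girth (here i = p - 1), infinity if no witness exists.\<close>
definition girth :: "'k::field itself \<Rightarrow> nat set set \<Rightarrow> nat \<Rightarrow> enat" where
  "girth k K i = Inf ((\<lambda>W. enat (card W)) `
      {W. W \<subseteq> verts K \<and> (\<exists>F\<in>K. homology_nonzero k (induced (link K F) W) i)})"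

end

theory Submission
  imports Defs
begin


lemma neg1_pow_2q: "(-1::'k::field) ^ (n + 2*q) = (-1) ^ n"
  by (simp add: power_add power_mult)

locale cp =
  fixes a b :: "nat \<Rightarrow> nat" and p :: nat
  assumes ab: "\<And>i j. i < p \<Longrightarrow> j < p \<Longrightarrow> a i \<noteq> b j"
    and ainj: "\<And>i j. i < p \<Longrightarrow> j < p \<Longrightarrow> a i = a j \<Longrightarrow> i = j"
    and binj: "\<And>i j. i < p \<Longrightarrow> j < p \<Longrightarrow> b i = b j \<Longrightarrow> i = j"
begin

definition W where "W = a ` {..<p} \<union> b ` {..<p}"
definition tr where "tr T \<longleftrightarrow> T \<subseteq> W \<and> (\<forall>i<p. a i \<in> T \<longleftrightarrow> b i \<notin> T)"
definition sel where "sel T i = (if a i \<in> T then a i else b i)"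
definition L where "L = {T. T \<subseteq> W \<and> (\<forall>i<p. \<not> (a i \<in> T \<and> b i \<in> T))}"
definition gj where "gj G j \<longleftrightarrow> G \<subseteq> W \<and> a j \<notin> G \<and> b j \<notin> G \<and> (\<forall>i<p. i \<noteq> j \<longrightarrow> (a i \<in> G \<longleftrightarrow> b i \<notin> G))"

definition cc :: "nat set \<Rightarrow> 'k::field" where
  "cc T = (if tr T then (-1) ^ (card {i. i < p \<and> b i \<in> T} +
       card {(i,i'). i < p \<and> i' < i \<and> sel T i < sel T i'}) else 0)"

lemma finW: "finite W" unfolding W_def by simp

lemma sel_inj: "i < p \<Longrightarrow> i' < p \<Longrightarrow> sel T i = sel T i' \<Longrightarrow> i = i'"
  unfolding sel_def using ab ainj binj by (auto split: if_splits) (metis)+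

lemma verts_L: "verts L = W"
proof
  show "verts L \<subseteq> W" unfolding verts_def L_def by auto
  show "W \<subseteq> verts L"
  proof
    fix w assume w: "w \<in> W"
    have "{w} \<in> L" using w ab unfolding L_def by (auto, metis)
    thus "w \<in> verts L" unfolding verts_def by auto
  qed
qed

lemma tr_L: "tr T \<Longrightarrow> T \<in> L"
  unfolding tr_def L_def by auto

lemma tr_eq: "tr T \<Longrightarrow> T = sel T ` {..<p}"
proof -
  assume t: "tr T"
  show ?thesis
  proof
    show "T \<subseteq> sel T ` {..<p}"
    proof
      fix x assume x: "x \<in> T"
      then have "x \<in> W" using t tr_def by auto
      then obtain i where i: "i < p" "x = a i \<or> x = b i" unfolding W_def by auto
      then have "sel T i = x" using t x unfolding tr_def sel_def by auto
      thus "x \<in> sel T ` {..<p}" using i by auto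
    qed
    show "sel T ` {..<p} \<subseteq> T" using t unfolding tr_def sel_def by auto
  qed
qed

lemma tr_card: "tr T \<Longrightarrow> card T = p"
proof -
  assume t: "tr T"
  have "inj_on (sel T) {..<p}" by (rule inj_onI) (use sel_inj in auto)
  then have "card (sel T ` {..<p}) = p" by (simp add: card_image)
  thus ?thesis using tr_eq[OF t] by simp
qed

lemma L_card: "T \<in> L \<Longrightarrow> card T \<le> p"
proof -
  assume T: "T \<in> L"
  define idx where "idx u = (SOME i. i < p \<and> (u = a i \<or> u = b i))" for u
  have idx: "idx u < p \<and> (u = a (idx u) \<or> u = b (idx u))" if "u \<in> T" for u
  proof -
    have "u \<in> W" using T that L_def by auto
    then have "\<exists>i. i < p \<and> (u = a i \<or> u = b i)" unfolding W_def by auto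
    thus ?thesis unfolding idx_def by (rule someI_ex)
  qed
  have "inj_on idx T"
  proof (rule inj_onI)
    fix u v assume u: "u \<in> T" and v: "v \<in> T" and e: "idx u = idx v"
    have np: "\<not> (a (idx u) \<in> T \<and> b (idx u) \<in> T)" using T idx[OF u] unfolding L_def by auto
    show "u = v" using idx[OF u] idx[OF v] e u v np by auto
  qed
  moreover have "idx ` T \<subseteq> {..<p}" using idx by auto
  ultimately have "card T \<le> card {..<p}" using card_inj_on_le by blast
  thus ?thesis by simp
qed


lemma sel_ins: assumes g: "gj G j" and j: "j < p" and v: "v = a j \<or> v = b j" and i: "i < p"
  shows "sel (insert v G) i = (if i = j then v else sel G i)"
proof (cases "i = j")
  case True
  then show ?thesis using v g ab[OF j j] unfolding sel_def gj_def by auto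
next
  case False
  have "a i \<noteq> v" using v ab[OF i j] ainj[OF i j] False by auto
  then show ?thesis using False unfolding sel_def by auto
qed

lemma tr_ins: assumes g: "gj G j" and j: "j < p" and v: "v = a j \<or> v = b j"
  shows "tr (insert v G)"
proof -
  have vW: "v \<in> W" using v j unfolding W_def by auto
  have "\<forall>i<p. a i \<in> insert v G \<longleftrightarrow> b i \<notin> insert v G"
  proof (intro allI impI)
    fix i assume i: "i < p"
    show "a i \<in> insert v G \<longleftrightarrow> b i \<notin> insert v G"
    proof (cases "i = j")
      case True
      then show ?thesis using v g ab[OF j j] unfolding gj_def by auto
    next
      case False
      have "a i \<noteq> v" "b i \<noteq> v" using v ab[OF i j] ab[OF j i] ainj[OF i j] binj[OF i j] False by auto
      then show ?thesis using g False i unfolding gj_def by auto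
    qed
  qed
  then show ?thesis using g vW unfolding tr_def gj_def by auto
qed

lemma G_img: assumes g: "gj G j" and j: "j < p"
  shows "G = sel G ` ({..<p} - {j})"
proof
  show "G \<subseteq> sel G ` ({..<p} - {j})"
  proof
    fix u assume u: "u \<in> G"
    then have "u \<in> W" using g gj_def by auto
    then obtain i where i: "i < p" "u = a i \<or> u = b i" unfolding W_def by auto
    have "i \<noteq> j" using i u g unfolding gj_def by auto
    moreover have "sel G i = u" using i u g \<open>i \<noteq> j\<close> unfolding gj_def sel_def by auto
    ultimately show "u \<in> sel G ` ({..<p} - {j})" using i by force
  qed
  show "sel G ` ({..<p} - {j}) \<subseteq> G" using g unfolding gj_def sel_def by auto
qed

lemma sel_ne: assumes j: "j < p" and v: "v = a j \<or> v = b j" and i: "i < p" "i \<noteq> j"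
  shows "sel G i \<noteq> v"
  using v ab[OF i(1) j] ab[OF j i(1)] ainj[OF i(1) j] binj[OF i(1) j] i unfolding sel_def by auto


lemma inv_split: assumes g: "gj G j" and j: "j < p" and v: "v = a j \<or> v = b j"
  shows "card {(i,i'). i < p \<and> i' < i \<and> sel (insert v G) i < sel (insert v G) i'} =
    card {(i,i'). i < p \<and> i' < i \<and> i \<noteq> j \<and> i' \<noteq> j \<and> sel G i < sel G i'}
    + card {i'. i' < j \<and> v < sel G i'} + card {i. j < i \<and> i < p \<and> sel G i < v}"
proof -
  let ?T = "insert v G"
  have st: "\<And>i. i < p \<Longrightarrow> sel ?T i = (if i = j then v else sel G i)"
    using sel_ins[OF g j v] by blast
  define S0 where "S0 = {(i,i'). i < p \<and> i' < i \<and> i \<noteq> j \<and> i' \<noteq> j \<and> sel G i < sel G i'}"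
  define P where "P = {i'. i' < j \<and> v < sel G i'}"
  define Q where "Q = {i. j < i \<and> i < p \<and> sel G i < v}"
  have eq: "{(i,i'). i < p \<and> i' < i \<and> sel ?T i < sel ?T i'} = S0 \<union> ((\<lambda>i'. (j,i')) ` P \<union> (\<lambda>i. (i,j)) ` Q)"
  proof (rule set_eqI, clarify)
    fix x y
    show "((x,y) \<in> {(i,i'). i < p \<and> i' < i \<and> sel ?T i < sel ?T i'}) = ((x,y) \<in> S0 \<union> ((\<lambda>i'. (j,i')) ` P \<union> (\<lambda>i. (i,j)) ` Q))"
    proof (cases "x < p \<and> y < x")
      case True
      then have "y < p" by auto
      then show ?thesis using True st[of x] st[of y] j unfolding S0_def P_def Q_def by auto
    next
      case False
      then show ?thesis using j unfolding S0_def P_def Q_def by auto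
    qed
  qed
  have fS0: "finite S0" unfolding S0_def by (rule finite_subset[of _ "{..<p} \<times> {..<p}"]) auto
  have fP: "finite P" unfolding P_def by auto
  have fQ: "finite Q" unfolding Q_def by auto
  have c1: "card ((\<lambda>i'. (j,i')) ` P \<union> (\<lambda>i. (i,j)) ` Q) = card P + card Q"
    by (subst card_Un_disjoint) (use fP fQ in \<open>auto simp: card_image inj_on_def P_def Q_def\<close>)
  have "card (S0 \<union> ((\<lambda>i'. (j,i')) ` P \<union> (\<lambda>i. (i,j)) ` Q)) = card S0 + card ((\<lambda>i'. (j,i')) ` P \<union> (\<lambda>i. (i,j)) ` Q)"
    by (rule card_Un_disjoint) (use fS0 fP fQ in \<open>auto simp: S0_def\<close>)
  then show ?thesis using eq c1 unfolding S0_def P_def Q_def by simp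
qed

lemma lt_split: assumes g: "gj G j" and j: "j < p" and v: "v = a j \<or> v = b j"
  shows "card {u \<in> G. u < v} = card {i. i < j \<and> sel G i < v} + card {i. j < i \<and> i < p \<and> sel G i < v}"
proof -
  have inj: "inj_on (sel G) {..<p}" by (rule inj_onI) (use sel_inj in auto)
  have "{u \<in> G. u < v} = sel G ` ({i. i < j \<and> sel G i < v} \<union> {i. j < i \<and> i < p \<and> sel G i < v})"
  proof
    show "{u \<in> G. u < v} \<subseteq> sel G ` ({i. i < j \<and> sel G i < v} \<union> {i. j < i \<and> i < p \<and> sel G i < v})"
    proof
      fix x assume x: "x \<in> {u \<in> G. u < v}"
      then obtain i where i: "i < p" "i \<noteq> j" "x = sel G i" using G_img[OF g j] by blast
      then have "i < j \<or> j < i" by auto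
      then show "x \<in> sel G ` ({i. i < j \<and> sel G i < v} \<union> {i. j < i \<and> i < p \<and> sel G i < v})"
        using i x by auto
    qed
    show "sel G ` ({i. i < j \<and> sel G i < v} \<union> {i. j < i \<and> i < p \<and> sel G i < v}) \<subseteq> {u \<in> G. u < v}"
    proof
      fix x assume "x \<in> sel G ` ({i. i < j \<and> sel G i < v} \<union> {i. j < i \<and> i < p \<and> sel G i < v})"
      then obtain i where i0: "i < j \<and> sel G i < v \<or> j < i \<and> i < p \<and> sel G i < v" and ix: "x = sel G i" by auto
      then have i: "i < p" "i \<noteq> j" "x = sel G i" "x < v" using j by auto
      have "x \<in> G" using i by (subst G_img[OF g j]) auto
      then show "x \<in> {u \<in> G. u < v}" using i by auto
    qed
  qed
  moreover have "inj_on (sel G) ({i. i < j \<and> sel G i < v} \<union> {i. j < i \<and> i < p \<and> sel G i < v})"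
    by (rule inj_on_subset[OF inj]) (use j in auto)
  ultimately have "card {u \<in> G. u < v} = card ({i. i < j \<and> sel G i < v} \<union> {i. j < i \<and> i < p \<and> sel G i < v})"
    by (simp add: card_image)
  also have "\<dots> = card {i. i < j \<and> sel G i < v} + card {i. j < i \<and> i < p \<and> sel G i < v}"
    by (rule card_Un_disjoint) auto
  finally show ?thesis .
qed

lemma pr_split: assumes j: "j < p" and v: "v = a j \<or> v = b j"
  shows "card {i'. i' < j \<and> v < sel G i'} + card {i. i < j \<and> sel G i < v} = j"
proof -
  have "{i'. i' < j \<and> v < sel G i'} \<union> {i. i < j \<and> sel G i < v} = {..<j}"
  proof (rule set_eqI)
    fix i
    show "i \<in> {i'. i' < j \<and> v < sel G i'} \<union> {i. i < j \<and> sel G i < v} \<longleftrightarrow> i \<in> {..<j}"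
    proof (cases "i < j")
      case True
      then have "sel G i \<noteq> v" using sel_ne[OF j v, of i G] j by auto
      then show ?thesis using True by auto
    qed auto
  qed
  moreover have "card ({i'. i' < j \<and> v < sel G i'} \<union> {i. i < j \<and> sel G i < v}) =
     card {i'. i' < j \<and> v < sel G i'} + card {i. i < j \<and> sel G i < v}"
    by (rule card_Un_disjoint) auto
  ultimately show ?thesis by simp
qed

lemma beta_a: assumes g: "gj G j" and j: "j < p"
  shows "card {i. i < p \<and> b i \<in> insert (a j) G} = card {i. i < p \<and> b i \<in> G}"
proof -
  have "{i. i < p \<and> b i \<in> insert (a j) G} = {i. i < p \<and> b i \<in> G}"
  proof -
    have "\<And>i. i < p \<Longrightarrow> b i \<noteq> a j" using ab[OF j] by metis
    thus ?thesis by auto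
  qed
  thus ?thesis by simp
qed

lemma beta_b: assumes g: "gj G j" and j: "j < p"
  shows "card {i. i < p \<and> b i \<in> insert (b j) G} = Suc (card {i. i < p \<and> b i \<in> G})"
proof -
  have "{i. i < p \<and> b i \<in> insert (b j) G} = insert j {i. i < p \<and> b i \<in> G}"
    using binj[OF _ j] j by auto
  moreover have "j \<notin> {i. i < p \<and> b i \<in> G}" using g gj_def by auto
  ultimately show ?thesis by simp
qed


lemma fv: assumes g: "gj G j" and j: "j < p" and v: "v = a j \<or> v = b j"
  shows "(-1) ^ card {u \<in> G. u < v} * cc (insert v G) = ((-1::'k::field) ^ (card {i. i < p \<and> b i \<in> insert v G}
     + card {(i,i'). i < p \<and> i' < i \<and> i \<noteq> j \<and> i' \<noteq> j \<and> sel G i < sel G i'} + j))"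
proof -
  let ?Q = "card {i. j < i \<and> i < p \<and> sel G i < v}"
  have e: "card {u \<in> G. u < v} + (card {i. i < p \<and> b i \<in> insert v G} + card {(i,i'). i < p \<and> i' < i \<and> sel (insert v G) i < sel (insert v G) i'})
     = (card {i. i < p \<and> b i \<in> insert v G}
     + card {(i,i'). i < p \<and> i' < i \<and> i \<noteq> j \<and> i' \<noteq> j \<and> sel G i < sel G i'} + j) + 2 * ?Q"
    using inv_split[OF g j v] lt_split[OF g j v] pr_split[OF j v, of G] by simp
  have "(-1) ^ card {u \<in> G. u < v} * cc (insert v G) = (-1::'k) ^ (card {u \<in> G. u < v} + (card {i. i < p \<and> b i \<in> insert v G} + card {(i,i'). i < p \<and> i' < i \<and> sel (insert v G) i < sel (insert v G) i'}))"
    unfolding cc_def using tr_ins[OF g j v] by (simp add: power_add)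
  also have "\<dots> = ((-1::'k::field) ^ (card {i. i < p \<and> b i \<in> insert v G}
     + card {(i,i'). i < p \<and> i' < i \<and> i \<noteq> j \<and> i' \<noteq> j \<and> sel G i < sel G i'} + j))" unfolding e by (rule neg1_pow_2q)
  finally show ?thesis .
qed

lemma pair_cancel: assumes g: "gj G j" and j: "j < p"
  shows "(-1) ^ card {u \<in> G. u < a j} * cc (insert (a j) G) + (-1) ^ card {u \<in> G. u < b j} * cc (insert (b j) G) = (0::'k::field)"
  using fv[OF g j, of "a j", where 'k='k] fv[OF g j, of "b j", where 'k='k] beta_a[OF g j] beta_b[OF g j] by simp

lemma tr_insert_gj: assumes vW: "v \<in> W" and vG: "v \<notin> G" and t: "tr (insert v G)"
  shows "\<exists>j<p. (v = a j \<or> v = b j) \<and> gj G j"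
proof -
  obtain j where j: "j < p" "v = a j \<or> v = b j" using vW unfolding W_def by auto
  have "gj G j"
    unfolding gj_def
  proof (intro conjI allI impI)
    show "G \<subseteq> W" using t tr_def by auto
    show "a j \<notin> G" using j vG t ab[OF j(1) j(1)] unfolding tr_def by auto
    show "b j \<notin> G" using j vG t ab[OF j(1) j(1)] unfolding tr_def by auto
    fix i assume i: "i < p" "i \<noteq> j"
    have "a i \<noteq> v" "b i \<noteq> v" using j ab[OF i(1) j(1)] ab[OF j(1) i(1)] ainj[OF i(1) j(1)] binj[OF i(1) j(1)] i by auto
    then show "a i \<in> G \<longleftrightarrow> b i \<notin> G" using t i unfolding tr_def by auto
  qed
  then show ?thesis using j by auto
qed

lemma gj_other: assumes g: "gj G j" and j: "j < p" and vW: "v \<in> W" and vG: "v \<notin> G"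
  and va: "v \<noteq> a j" and vb: "v \<noteq> b j"
  shows "\<not> tr (insert v G)"
proof -
  obtain i where i: "i < p" "v = a i \<or> v = b i" using vW unfolding W_def by auto
  have "i \<noteq> j" using i va vb by auto
  then have "a i \<in> insert v G \<and> b i \<in> insert v G" using g i vG unfolding gj_def by auto
  then show ?thesis using i unfolding tr_def by auto
qed

lemma bd_cc: "bd L (cc :: nat set \<Rightarrow> 'k::field) G = 0"
proof -
  let ?f = "\<lambda>v. (-1) ^ card {u \<in> G. u < v} * (cc (insert v G) :: 'k)"
  have "bd L cc G = (\<Sum>v \<in> W - G. ?f v)"
    unfolding bd_def verts_L
    by (rule sum.cong) (auto simp: cc_def dest: tr_L)
  also have "\<dots> = 0"
  proof (cases "\<exists>j<p. gj G j")
    case True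
    then obtain j where g: "gj G j" and j: "j < p" by auto
    have ab_in: "{a j, b j} \<subseteq> W - G" using g j unfolding gj_def W_def by auto
    have "(\<Sum>v \<in> W - G. ?f v) = (\<Sum>v \<in> {a j, b j}. ?f v)"
      by (rule sum.mono_neutral_right) (use finW ab_in gj_other[OF g j] in \<open>auto simp: cc_def\<close>)
    also have "\<dots> = ?f (a j) + ?f (b j)" using ab[OF j j] by simp
    also have "\<dots> = 0" using pair_cancel[OF g j] by simp
    finally show ?thesis .
  next
    case False
    have "?f v = 0" if v: "v \<in> W - G" for v
    proof -
      have "\<not> tr (insert v G)" using tr_insert_gj[of v G] v False by auto
      thus ?thesis by (simp add: cc_def)
    qed
    then show ?thesis by simp
  qed
  finally show ?thesis .
qed


lemma hom_L: assumes p: "p \<ge> 1" shows "homology_nonzero TYPE('k::field) L (p - 1)"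
  unfolding homology_nonzero_def
proof (intro exI conjI)
  show "chain L (p - 1) (cc :: nat set \<Rightarrow> 'k)"
    unfolding chain_def using p by (auto simp: cc_def tr_L tr_card split: if_splits)
  show "bd L (cc :: nat set \<Rightarrow> 'k) = (\<lambda>_. 0)" using bd_cc by auto
  show "\<not> (\<exists>bb :: nat set \<Rightarrow> 'k. chain L (Suc (p - 1)) bb \<and> bd L bb = cc)"
  proof
    assume "\<exists>bb :: nat set \<Rightarrow> 'k. chain L (Suc (p - 1)) bb \<and> bd L bb = cc"
    then obtain bb :: "nat set \<Rightarrow> 'k" where ch: "chain L (Suc (p - 1)) bb" and e: "bd L bb = cc" by auto
    have z: "bb F = 0" for F
    proof (rule ccontr)
      assume "bb F \<noteq> 0"
      then have "F \<in> L" "card F = Suc p" using ch p unfolding chain_def by auto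
      then show False using L_card by fastforce
    qed
    have "bd L bb = (\<lambda>_. 0)" unfolding bd_def using z by (auto intro!: ext sum.neutral)
    moreover have "tr (a ` {..<p})" unfolding tr_def W_def using ab by fastforce
    then have "cc (a ` {..<p}) \<noteq> (0::'k)" unfolding cc_def by simp
    ultimately show False using e by (metis)
  qed
qed

end



lemma tri_hom: fixes x y z :: nat
  assumes xy: "x < y" and yz: "y < z"
  shows "homology_nonzero TYPE('k::field) {T. T \<subseteq> {x,y,z} \<and> T \<noteq> {x,y,z}} 1"
  unfolding homology_nonzero_def
proof -
  let ?L = "{T. T \<subseteq> {x,y,z} \<and> T \<noteq> {x,y,z}}"
  define c :: "nat set \<Rightarrow> 'k" where "c T = (if T = {x,y} then 1 else if T = {y,z} then 1 else if T = {x,z} then -1 else 0)" for T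
  have xz: "x < z" using xy yz by simp
  have vL: "verts ?L = {x,y,z}"
  proof
    show "verts ?L \<subseteq> {x,y,z}" unfolding verts_def by auto
    show "{x,y,z} \<subseteq> verts ?L"
    proof (intro subsetI)
      fix w assume w: "w \<in> {x,y,z}"
      have "{w} \<noteq> {x,y,z}"
      proof
        assume "{w} = {x,y,z}"
        then have "x \<in> {w}" "y \<in> {w}" by auto
        then show False using xy by simp
      qed
      then have "{w} \<in> ?L" using w by simp
      then show "w \<in> verts ?L" unfolding verts_def by (rule UnionI) simp
    qed
  qed
  have cT: "T = {x,y} \<or> T = {y,z} \<or> T = {x,z}" if "c T \<noteq> 0" for T
    using that by (cases "T = {x,y}"; cases "T = {y,z}"; cases "T = {x,z}") (simp_all add: c_def)
  have cL: "T \<in> ?L \<and> card T = 2" if "c T \<noteq> 0" for T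
  proof -
    have "z \<notin> {x,y}" "x \<notin> {y,z}" "y \<notin> {x,z}" using xy yz by auto
    have n1: "{x,y} \<noteq> {x,y,z}"
    proof
      assume eq: "{x,y} = {x,y,z}"
      have "z \<in> {x,y,z}" by simp
      then have "z \<in> {x,y}" by (subst eq)
      then show False using \<open>z \<notin> {x,y}\<close> by blast
    qed
    have n2: "{y,z} \<noteq> {x,y,z}"
    proof
      assume eq: "{y,z} = {x,y,z}"
      have "x \<in> {x,y,z}" by simp
      then have "x \<in> {y,z}" by (subst eq)
      then show False using \<open>x \<notin> {y,z}\<close> by blast
    qed
    have n3: "{x,z} \<noteq> {x,y,z}"
    proof
      assume eq: "{x,z} = {x,y,z}"
      have "y \<in> {x,y,z}" by simp
      then have "y \<in> {x,z}" by (subst eq)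
      then show False using \<open>y \<notin> {x,z}\<close> by blast
    qed
    show ?thesis using cT[OF that]
    proof (elim disjE)
      assume "T = {x,y}" then show ?thesis using n1 xy by auto
    next
      assume "T = {y,z}" then show ?thesis using n2 yz by auto
    next
      assume "T = {x,z}" then show ?thesis using n3 xy yz by auto
    qed
  qed
  have ch: "chain ?L 1 c" unfolding chain_def using cL by auto
  have bd0: "bd ?L c G = 0" for G
  proof -
    have bdG: "bd ?L c G = (\<Sum>v \<in> {x,y,z} - G. (-1) ^ card {u \<in> G. u < v} * c (insert v G))"
      unfolding bd_def vL
      by (rule sum.cong) (use cL in \<open>auto split: if_splits\<close>)
    have cv: "c {x,y} = 1" "c {y,z} = 1" "c {x,z} = -1"
      using xy yz by (auto simp: c_def doubleton_eq_iff)
    consider "G = {x}" | "G = {y}" | "G = {z}" | "G \<noteq> {x} \<and> G \<noteq> {y} \<and> G \<noteq> {z}" by blast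
    then show ?thesis
    proof cases
      case 1
      have s: "{x,y,z} - G = {y,z}" "{u \<in> G. u < y} = {x}" "{u \<in> G. u < z} = {x}" using 1 xy yz by auto
      have i: "insert y G = {x,y}" "insert z G = {x,z}" "card {x} = 1" using 1 by auto
      show ?thesis unfolding bdG s using yz by (simp add: i cv s)
    next
      case 2
      have s: "{x,y,z} - G = {x,z}" "{u \<in> G. u < x} = {}" "{u \<in> G. u < z} = {y}" using 2 xy yz by auto
      have i: "insert x G = {x,y}" "insert z G = {y,z}" "card {y} = 1" using 2 by auto
      show ?thesis unfolding bdG s using xy yz by (simp add: i cv s)
    next
      case 3
      have s: "{x,y,z} - G = {x,y}" "{u \<in> G. u < x} = {}" "{u \<in> G. u < y} = {}" using 3 xy yz by auto
      have i: "insert x G = {x,z}" "insert y G = {y,z}" using 3 by auto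
      show ?thesis unfolding bdG s using xy by (simp add: i cv s)
    next
      case 4
      have "c (insert v G) = 0" if "v \<in> {x,y,z} - G" for v
      proof -
        have vG: "v \<notin> G" using that by auto
        have Ge: "G = insert v G - {v}" using vG by auto
        have "insert v G \<noteq> {s,t}" if st: "s \<noteq> t" "{s,t} \<noteq> {}" "G \<noteq> {s}" "G \<noteq> {t}" for s t
        proof
          assume e: "insert v G = {s,t}"
          then have "v = s \<or> v = t" by auto
          then show False
          proof
            assume "v = s" then have "G = {t}" using Ge e st by auto
            then show False using st by simp
          next
            assume "v = t" then have "G = {s}" using Ge e st by auto
            then show False using st by simp
          qed
        qed
        then have "insert v G \<noteq> {x,y}" "insert v G \<noteq> {y,z}" "insert v G \<noteq> {x,z}"
          using 4 xy yz by auto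
        then show ?thesis using cT by blast
      qed
      then show ?thesis unfolding bdG by simp
    qed
  qed
  have nb: "\<not> (\<exists>bb :: nat set \<Rightarrow> 'k. chain ?L (Suc 1) bb \<and> bd ?L bb = c)"
  proof
    assume "\<exists>bb :: nat set \<Rightarrow> 'k. chain ?L (Suc 1) bb \<and> bd ?L bb = c"
    then obtain bb :: "nat set \<Rightarrow> 'k" where chb: "chain ?L (Suc 1) bb" and e: "bd ?L bb = c" by auto
    have z: "bb F = 0" for F
    proof (rule ccontr)
      assume "bb F \<noteq> 0"
      then have F: "F \<subseteq> {x,y,z}" "F \<noteq> {x,y,z}" "card F = 3" using chb unfolding chain_def by auto
      have "card {x,y,z} = 3" using xy yz by auto
      then show False using F card_subset_eq[of "{x,y,z}" F] by auto
    qed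
    have "bd ?L bb = (\<lambda>_. 0)" unfolding bd_def using z by (auto intro!: ext sum.neutral)
    moreover have "c {x,y} \<noteq> 0" unfolding c_def by simp
    ultimately show False using e by metis
  qed
  show "\<exists>c :: nat set \<Rightarrow> 'k. chain ?L 1 c \<and> bd ?L c = (\<lambda>_. 0) \<and> \<not> (\<exists>bb. chain ?L (Suc 1) bb \<and> bd ?L bb = c)"
    using ch bd0 nb by blast
qed




definition comatch :: "(nat \<Rightarrow> nat \<Rightarrow> bool) \<Rightarrow> nat set \<Rightarrow> nat \<Rightarrow> bool" where
 "comatch N S k \<longleftrightarrow> (\<exists>a b. (\<forall>i<k. a i \<in> S \<and> b i \<in> S \<and> N (a i) (b i)) \<and>
    (\<forall>i<k. \<forall>j<k. i \<noteq> j \<longrightarrow> \<not> N (a i) (a j) \<and> \<not> N (a i) (b j) \<and> \<not> N (b i) (b j)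
        \<and> a i \<noteq> a j \<and> a i \<noteq> b j \<and> b i \<noteq> b j))"

definition ne2 :: "(nat \<Rightarrow> nat \<Rightarrow> bool) \<Rightarrow> nat set \<Rightarrow> nat" where
  "ne2 N S = card {(x,y). x \<in> S \<and> y \<in> S \<and> N x y}"

definition deg :: "(nat \<Rightarrow> nat \<Rightarrow> bool) \<Rightarrow> nat set \<Rightarrow> nat \<Rightarrow> nat" where
  "deg N S h = card {v \<in> S. N h v}"

lemma comatch_ext:
  assumes sym: "\<And>u v. N u v \<Longrightarrow> N v u"
    and cm: "comatch N B k" and a0: "a0 \<in> S" and b0: "b0 \<in> S" and n0: "N a0 b0"
    and B: "B \<subseteq> {v \<in> S. \<not> N a0 v \<and> \<not> N b0 v}"
  shows "comatch N S (Suc k)"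
proof -
  obtain a b where m1: "\<forall>i<k. a i \<in> B \<and> b i \<in> B \<and> N (a i) (b i)"
    and m2: "\<forall>i<k. \<forall>j<k. i \<noteq> j \<longrightarrow> \<not> N (a i) (a j) \<and> \<not> N (a i) (b j) \<and> \<not> N (b i) (b j)
        \<and> a i \<noteq> a j \<and> a i \<noteq> b j \<and> b i \<noteq> b j"
    using cm unfolding comatch_def by blast
  have nb0: "\<not> N b0 a0 \<Longrightarrow> False" using sym n0 by blast
  have inB: "\<And>v. v \<in> B \<Longrightarrow> v \<in> S \<and> \<not> N a0 v \<and> \<not> N b0 v \<and> \<not> N v a0 \<and> \<not> N v b0 \<and> v \<noteq> a0 \<and> v \<noteq> b0"
    using B sym n0 by blast
  let ?a = "a(k := a0)" and ?b = "b(k := b0)"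
  have "(\<forall>i<Suc k. ?a i \<in> S \<and> ?b i \<in> S \<and> N (?a i) (?b i))"
    using m1 inB a0 b0 n0 by (auto simp: less_Suc_eq)
  moreover have "\<forall>i<Suc k. \<forall>j<Suc k. i \<noteq> j \<longrightarrow> \<not> N (?a i) (?a j) \<and> \<not> N (?a i) (?b j) \<and> \<not> N (?b i) (?b j)
        \<and> ?a i \<noteq> ?a j \<and> ?a i \<noteq> ?b j \<and> ?b i \<noteq> ?b j"
  proof (intro allI impI)
    fix i j assume i: "i < Suc k" and j: "j < Suc k" and ij: "i \<noteq> j"
    consider "i < k" "j < k" | "i = k" "j < k" | "i < k" "j = k" using i j ij by (auto simp: less_Suc_eq)
    then show "\<not> N (?a i) (?a j) \<and> \<not> N (?a i) (?b j) \<and> \<not> N (?b i) (?b j)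
        \<and> ?a i \<noteq> ?a j \<and> ?a i \<noteq> ?b j \<and> ?b i \<noteq> ?b j"
    proof cases
      case 1 then show ?thesis using m2 ij by auto
    next
      case 2 then show ?thesis using m1 inB[of "a j"] inB[of "b j"] by auto
    next
      case 3 then show ?thesis using m1 inB[of "a i"] inB[of "b i"] by auto
    qed
  qed
  ultimately show ?thesis unfolding comatch_def by blast
qed

lemma claim:
  assumes sym: "\<And>u v. N u v \<Longrightarrow> N v u" and irr: "\<And>u. \<not> N u u"
  shows "finite S \<Longrightarrow> (\<forall>C\<subseteq>S. (\<forall>u\<in>C. \<forall>v\<in>C. \<not> N u v) \<longrightarrow> card C \<le> w) \<Longrightarrow> \<not> comatch N S k
     \<Longrightarrow> real w \<le> real (card S) \<Longrightarrow> (real (card S) - real w)^2 \<le> 4^k * real (ne2 N S)"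
proof (induction k arbitrary: S)
  case 0
  have "comatch N S 0" unfolding comatch_def by auto
  then show ?case using 0 by blast
next
  case (Suc k)
  note fS = Suc.prems(1) and cl = Suc.prems(2) and ncm = Suc.prems(3) and wS = Suc.prems(4)
  define m where "m = real (card S) - real w"
  have m0: "m \<ge> 0" using wS m_def by simp
  define H where "H = {h \<in> S. m / 4 \<le> real (deg N S h)}"
  have fP: "finite {(x,y). x \<in> S \<and> y \<in> S \<and> N x y}"
    by (rule finite_subset[of _ "S \<times> S"]) (use fS in auto)
  show ?case
  proof (cases "\<forall>a\<in>S. \<forall>b\<in>S. N a b \<longrightarrow> a \<in> H \<or> b \<in> H")
    case True
    have "\<forall>u\<in>S - H. \<forall>v\<in>S - H. \<not> N u v"
    proof (intro ballI)
      fix u v assume "u \<in> S - H" "v \<in> S - H"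
      then show "\<not> N u v" using True by auto
    qed
    then have "card (S - H) \<le> w" using cl[rule_format, of "S - H"] by auto
    moreover have "card (S - H) = card S - card H" using fS by (simp add: H_def card_Diff_subset)
    moreover have "card H \<le> card S" using fS by (simp add: H_def card_mono)
    ultimately have cH: "m \<le> real (card H)" unfolding m_def by linarith
    have "Sigma H (\<lambda>h. {v \<in> S. N h v}) \<subseteq> {(x,y). x \<in> S \<and> y \<in> S \<and> N x y}" unfolding H_def by auto
    then have "card (Sigma H (\<lambda>h. {v \<in> S. N h v})) \<le> ne2 N S" unfolding ne2_def using fP card_mono by blast
    moreover have "card (Sigma H (\<lambda>h. {v \<in> S. N h v})) = (\<Sum>h\<in>H. deg N S h)"
      unfolding deg_def by (rule card_SigmaI) (use fS in \<open>auto simp: H_def\<close>)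
    ultimately have "(\<Sum>h\<in>H. real (deg N S h)) \<le> real (ne2 N S)" by (metis of_nat_le_iff of_nat_sum)
    moreover have "(\<Sum>h\<in>H. m / 4) \<le> (\<Sum>h\<in>H. real (deg N S h))"
      by (rule sum_mono) (simp add: H_def)
    ultimately have "real (card H) * (m/4) \<le> real (ne2 N S)" by simp
    moreover have "m * (m/4) \<le> real (card H) * (m/4)" using cH m0 by (intro mult_right_mono) auto
    ultimately have A: "m * (m/4) \<le> real (ne2 N S)" by linarith
    have B: "m^2 = 4 * (m * (m/4))" by (simp add: power2_eq_square)
    have C: "4 * real (ne2 N S) \<le> 4 ^ Suc k * real (ne2 N S)" by (rule mult_right_mono) auto
    have "m^2 \<le> 4 ^ Suc k * real (ne2 N S)" using A B C by linarith
    then show ?thesis unfolding m_def .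
  next
    case False
    then obtain a0 b0 where a0: "a0 \<in> S" and b0: "b0 \<in> S" and n0: "N a0 b0" and na: "a0 \<notin> H" and nb: "b0 \<notin> H"
      by blast
    define B where "B = {v \<in> S. \<not> N a0 v \<and> \<not> N b0 v}"
    have fB: "finite B" using fS B_def by simp
    have BS: "B \<subseteq> S" unfolding B_def by auto
    have "S - B \<subseteq> {v \<in> S. N a0 v} \<union> {v \<in> S. N b0 v}" unfolding B_def by auto
    then have "card (S - B) \<le> card ({v \<in> S. N a0 v} \<union> {v \<in> S. N b0 v})" using fS by (simp add: card_mono)
    also have "\<dots> \<le> deg N S a0 + deg N S b0" unfolding deg_def by (rule card_Un_le)
    finally have "real (card (S - B)) \<le> real (deg N S a0) + real (deg N S b0)" by linarith
    moreover have "real (deg N S a0) < m/4" "real (deg N S b0) < m/4" using na nb a0 b0 H_def by auto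
    moreover have "real (card (S - B)) = real (card S) - real (card B)"
    proof -
      have "card (S - B) = card S - card B" by (rule card_Diff_subset[OF fB BS])
      moreover have "card B \<le> card S" using fS BS by (simp add: card_mono)
      ultimately show ?thesis by simp
    qed
    ultimately have cB: "real (card B) - real w > m / 2" using m_def by linarith
    have ncB: "\<not> comatch N B k"
      using comatch_ext[where N=N and B=B and k=k and S=S, OF sym _ a0 b0 n0] ncm B_def by blast
    have clB: "\<forall>C\<subseteq>B. (\<forall>u\<in>C. \<forall>v\<in>C. \<not> N u v) \<longrightarrow> card C \<le> w" using cl BS by (meson order_trans)
    have IH: "(real (card B) - real w)^2 \<le> 4^k * real (ne2 N B)"
      using Suc.IH[OF fB clB ncB] cB m0 by linarith
    have "ne2 N B \<le> ne2 N S" unfolding ne2_def by (rule card_mono[OF fP]) (use BS in auto)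
    moreover have "(m/2)^2 \<le> (real (card B) - real w)^2"
      using cB m0 by (intro power_mono) auto
    moreover have "4^k * real (ne2 N B) \<le> 4^k * real (ne2 N S)"
      by (rule mult_left_mono) (use \<open>ne2 N B \<le> ne2 N S\<close> in auto)
    ultimately have "(m/2)^2 \<le> 4^k * real (ne2 N S)" using IH by linarith
    moreover have "m^2 = 4 * (m/2)^2" by (simp add: power2_eq_square)
    ultimately have "m^2 \<le> 4 ^ Suc k * real (ne2 N S)" by simp
    then show ?thesis unfolding m_def .
  qed
qed




lemma sc_empty: "simplicial_complex K \<Longrightarrow> {} \<in> K"
  unfolding simplicial_complex_def by blast

lemma sc_sub: "simplicial_complex K \<Longrightarrow> F \<in> K \<Longrightarrow> G \<subseteq> F \<Longrightarrow> G \<in> K"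
  unfolding simplicial_complex_def by blast

lemma sc_face_finite: assumes "simplicial_complex K" "F \<in> K" shows "finite F"
proof -
  have "Pow F \<subseteq> K" using assms unfolding simplicial_complex_def by blast
  then have "finite (Pow F)" using assms(1) unfolding simplicial_complex_def by (meson finite_subset)
  then show ?thesis by simp
qed

lemma sc_verts_finite: "simplicial_complex K \<Longrightarrow> finite (verts K)"
  unfolding verts_def using sc_face_finite by (metis finite_Union simplicial_complex_def)

lemma face_card: assumes "simplicial_complex K" "F \<in> K" shows "card F \<le> cdim K"
  unfolding cdim_def using assms by (simp add: simplicial_complex_def)

lemma face_verts: "F \<in> K \<Longrightarrow> F \<subseteq> verts K" unfolding verts_def by auto

lemma link_empty: "link K {} = K" unfolding link_def by auto

lemma girth_le: assumes "W \<subseteq> verts K" "F \<in> K" "homology_nonzero k (induced (link K F) W) i"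
  shows "girth k K i \<le> enat (card W)"
  unfolding girth_def by (rule Inf_lower) (use assms in auto)

lemma core:
  fixes \<Gamma> :: "nat set set"
  assumes sc: "simplicial_complex \<Gamma>"
    and cliq: "\<And>C. C \<subseteq> verts \<Gamma> \<Longrightarrow> (\<forall>u\<in>C. \<forall>v\<in>C. u \<noteq> v \<longrightarrow> {u,v} \<in> \<Gamma>) \<Longrightarrow> C \<in> \<Gamma>"
    and p: "p \<ge> 1"
    and cm: "comatch (\<lambda>u v. u \<noteq> v \<and> {u,v} \<notin> \<Gamma>) (verts \<Gamma>) p"
  shows "girth TYPE('k::field) \<Gamma> (p - 1) \<le> enat (2 * p)"
proof -
  let ?N = "\<lambda>u v. u \<noteq> v \<and> {u,v} \<notin> \<Gamma>"
  obtain a b where m1: "\<forall>i<p. a i \<in> verts \<Gamma> \<and> b i \<in> verts \<Gamma> \<and> ?N (a i) (b i)"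
    and m2: "\<forall>i<p. \<forall>j<p. i \<noteq> j \<longrightarrow> \<not> ?N (a i) (a j) \<and> \<not> ?N (a i) (b j) \<and> \<not> ?N (b i) (b j)
        \<and> a i \<noteq> a j \<and> a i \<noteq> b j \<and> b i \<noteq> b j"
    using cm unfolding comatch_def by blast
  interpret cp a b p
  proof
    fix i j assume i: "i < p" and j: "j < p"
    show "a i \<noteq> b j" using m1 m2 i j by (cases "i = j") auto
    show "a i = a j \<Longrightarrow> i = j" using m2 i j by auto
    show "b i = b j \<Longrightarrow> i = j" using m2 i j by auto
  qed
  have WV: "W \<subseteq> verts \<Gamma>" unfolding W_def using m1 by auto
  have LI: "induced \<Gamma> W = L"
  proof -
    have "T \<in> \<Gamma> \<longleftrightarrow> (\<forall>i<p. \<not> (a i \<in> T \<and> b i \<in> T))" if T: "T \<subseteq> W" for T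
    proof
      assume TG: "T \<in> \<Gamma>"
      show "\<forall>i<p. \<not> (a i \<in> T \<and> b i \<in> T)"
      proof (intro allI impI notI)
        fix i assume i: "i < p" and ab: "a i \<in> T \<and> b i \<in> T"
        then have "{a i, b i} \<subseteq> T" by simp
        then have "{a i, b i} \<in> \<Gamma>" using TG sc sc_sub by blast
        then show False using m1 i by auto
      qed
    next
      assume np: "\<forall>i<p. \<not> (a i \<in> T \<and> b i \<in> T)"
      have "\<forall>u\<in>T. \<forall>v\<in>T. u \<noteq> v \<longrightarrow> {u,v} \<in> \<Gamma>"
      proof (intro ballI impI)
        fix u v assume u: "u \<in> T" and v: "v \<in> T" and uv: "u \<noteq> v"
        obtain i where i: "i < p" "u = a i \<or> u = b i" using u T W_def by auto
        obtain j where j: "j < p" "v = a j \<or> v = b j" using v T W_def by auto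
        show "{u,v} \<in> \<Gamma>"
        proof (cases "i = j")
          case True
          then show ?thesis using i j u v uv np by auto
        next
          case False
          have "\<not> ?N (a i) (a j)" "\<not> ?N (a i) (b j)" "\<not> ?N (b i) (b j)" "\<not> ?N (a j) (b i)"
            using m2 i j False by auto
          then show ?thesis using i(2) j(2) uv by (auto simp: insert_commute)
        qed
      qed
      then show "T \<in> \<Gamma>" using cliq T WV by blast
    qed
    then show ?thesis unfolding induced_def L_def by auto
  qed
  have "homology_nonzero TYPE('k) (induced (link \<Gamma> {}) W) (p - 1)"
    unfolding link_empty LI by (rule hom_L[OF p])
  then have "girth TYPE('k) \<Gamma> (p - 1) \<le> enat (card W)"
    using girth_le[OF WV sc_empty[OF sc]] by blast
  moreover have "card W \<le> 2 * p"
  proof -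
    have "card W \<le> card (a ` {..<p}) + card (b ` {..<p})" unfolding W_def by (rule card_Un_le)
    also have "\<dots> \<le> p + p" using card_image_le[of "{..<p}" a] card_image_le[of "{..<p}" b] by simp
    finally show ?thesis by simp
  qed
  ultimately show ?thesis by (meson enat_ord_simps(1) order_trans)
qed





lemma ne2_le:
  assumes fV: "finite V"
  shows "ne2 (\<lambda>u v. u \<noteq> v \<and> {u,v} \<notin> \<Gamma>) V \<le> 2 * card {F. F \<subseteq> V \<and> card F = 2 \<and> F \<notin> \<Gamma>}"
proof -
  define N where "N = (\<lambda>u v. u \<noteq> v \<and> {u,v} \<notin> \<Gamma>)"
  have Nlt: "N x y \<Longrightarrow> x < y \<or> y < x" for x y unfolding N_def by auto
  define P where "P = {(x,y). x \<in> V \<and> y \<in> V \<and> N x y}"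
  define P1 where "P1 = {(x,y). x \<in> V \<and> y \<in> V \<and> N x y \<and> x < y}"
  define P2 where "P2 = {(x,y). x \<in> V \<and> y \<in> V \<and> N x y \<and> y < x}"
  define NE where "NE = {F. F \<subseteq> V \<and> card F = 2 \<and> F \<notin> \<Gamma>}"
  have fNE: "finite NE" unfolding NE_def by (rule finite_subset[of _ "Pow V"]) (use fV in auto)
  have "P \<subseteq> P1 \<union> P2" unfolding P_def P1_def P2_def using Nlt by blast
  then have "card P \<le> card (P1 \<union> P2)"
    by (rule card_mono[rotated]) (unfold P1_def P2_def, rule finite_subset[of _ "V \<times> V"], use fV in auto)
  also have "\<dots> \<le> card P1 + card P2" by (rule card_Un_le)
  finally have cP: "card P \<le> card P1 + card P2" .
  have im: "(\<lambda>(x,y). {x,y}) ` P1 \<subseteq> NE" "(\<lambda>(x,y). {x,y}) ` P2 \<subseteq> NE"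
    unfolding P1_def P2_def NE_def N_def by auto
  have "card P1 \<le> card NE"
  proof (rule card_inj_on_le[OF _ im(1) fNE])
    show "inj_on (\<lambda>(x,y). {x,y}) P1"
    proof (rule inj_onI, clarify)
      fix x y x' y' assume "(x,y) \<in> P1" "(x',y') \<in> P1" "{x,y} = {x',y'}"
      then show "x = x' \<and> y = y'" unfolding P1_def by (auto simp: doubleton_eq_iff)
    qed
  qed
  moreover have "card P2 \<le> card NE"
  proof (rule card_inj_on_le[OF _ im(2) fNE])
    show "inj_on (\<lambda>(x,y). {x,y}) P2"
    proof (rule inj_onI, clarify)
      fix x y x' y' assume "(x,y) \<in> P2" "(x',y') \<in> P2" "{x,y} = {x',y'}"
      then show "x = x' \<and> y = y'" unfolding P2_def by (auto simp: doubleton_eq_iff)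
    qed
  qed
  ultimately have "card P \<le> 2 * card NE" using cP by linarith
  then show ?thesis unfolding ne2_def P_def NE_def N_def .
qed

lemma f1_eq:
  assumes sc: "simplicial_complex \<Gamma>"
  shows "real (f1 \<Gamma>) = real (card (verts \<Gamma>) choose 2) - real (card {F. F \<subseteq> verts \<Gamma> \<and> card F = 2 \<and> F \<notin> \<Gamma>})"
proof -
  let ?V = "verts \<Gamma>"
  have fV: "finite ?V" using sc_verts_finite[OF sc] .
  let ?A = "{F. F \<subseteq> ?V \<and> card F = 2}"
  let ?NE = "{F. F \<subseteq> ?V \<and> card F = 2 \<and> F \<notin> \<Gamma>}"
  have fA: "finite ?A" by (rule finite_subset[of _ "Pow ?V"]) (use fV in auto)
  have e: "{F \<in> \<Gamma>. card F = 2} = ?A - ?NE" using face_verts[of _ \<Gamma>] by auto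
  have s: "?NE \<subseteq> ?A" by auto
  have "card (?A - ?NE) = card ?A - card ?NE" by (rule card_Diff_subset[OF finite_subset[OF s fA] s])
  moreover have "card ?NE \<le> card ?A" by (rule card_mono[OF fA s])
  moreover have "card ?A = card ?V choose 2" by (rule n_subsets[OF fV])
  ultimately show ?thesis unfolding f1_def e by simp
qed

lemma part1:
  assumes p: "(p::nat) \<ge> 1" and d: "(\<delta>::real) > 0"
  shows "\<exists>\<epsilon>::real. \<epsilon> > 0 \<and>
               (\<forall>\<Gamma>::nat set set. simplicial_complex \<Gamma> \<and> flag \<Gamma> \<and>
                   girth TYPE('k::field) \<Gamma> (p - 1) > enat (2 * p) \<and>
                   real (cdim \<Gamma>) < (1 - \<delta>) * real (card (verts \<Gamma>)) \<longrightarrow>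
                   real (f1 \<Gamma>) < real (card (verts \<Gamma>) choose 2) - \<epsilon> * real (card (verts \<Gamma>)) ^ 2)"
proof (intro exI conjI allI impI)
  show "\<delta>^2 / (2 * 4^p) > (0::real)" using d by simp
  fix \<Gamma> :: "nat set set"
  assume H: "simplicial_complex \<Gamma> \<and> flag \<Gamma> \<and> girth TYPE('k::field) \<Gamma> (p - 1) > enat (2 * p) \<and>
                   real (cdim \<Gamma>) < (1 - \<delta>) * real (card (verts \<Gamma>))"
  then have sc: "simplicial_complex \<Gamma>" and fl: "flag \<Gamma>" and gi: "girth TYPE('k) \<Gamma> (p - 1) > enat (2 * p)"
    and cd: "real (cdim \<Gamma>) < (1 - \<delta>) * real (card (verts \<Gamma>))" by auto
  define V where "V = verts \<Gamma>"
  define n where "n = card V"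
  define w where "w = cdim \<Gamma>"
  let ?N = "\<lambda>u v. u \<noteq> v \<and> {u,v} \<notin> \<Gamma>"
  let ?NE = "{F. F \<subseteq> V \<and> card F = 2 \<and> F \<notin> \<Gamma>}"
  have fV: "finite V" using sc_verts_finite[OF sc] V_def by simp
  have cliq: "\<And>C. C \<subseteq> verts \<Gamma> \<Longrightarrow> (\<forall>u\<in>C. \<forall>v\<in>C. u \<noteq> v \<longrightarrow> {u,v} \<in> \<Gamma>) \<Longrightarrow> C \<in> \<Gamma>"
    by (rule fl[unfolded flag_def, rule_format]) auto
  have ncm: "\<not> comatch ?N V p"
  proof
    assume "comatch ?N V p"
    then have "comatch ?N (verts \<Gamma>) p" unfolding V_def .
    then have "girth TYPE('k) \<Gamma> (p - 1) \<le> enat (2 * p)" using core[where 'k='k, OF sc _ p] cliq by blast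
    then show False using gi by simp
  qed
  have cl: "\<forall>C\<subseteq>V. (\<forall>u\<in>C. \<forall>v\<in>C. \<not> ?N u v) \<longrightarrow> card C \<le> w"
  proof (intro allI impI)
    fix C assume C: "C \<subseteq> V" and nn: "\<forall>u\<in>C. \<forall>v\<in>C. \<not> ?N u v"
    have "C \<in> \<Gamma>" by (rule cliq) (use C nn V_def in auto)
    then show "card C \<le> w" unfolding w_def by (rule face_card[OF sc])
  qed
  have dn: "\<delta> * real n < real n - real w" using cd unfolding w_def n_def V_def by (simp add: algebra_simps)
  have dn0: "\<delta> * real n \<ge> 0" using d by simp
  have wn: "real w \<le> real n" using dn dn0 by linarith
  have c: "(real n - real w)^2 \<le> 4^p * real (ne2 ?N V)"
    unfolding n_def by (rule claim[OF _ _ fV cl ncm]) (use wn n_def in \<open>auto simp: insert_commute\<close>)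
  have "(\<delta> * real n)^2 < (real n - real w)^2"
    by (rule power_strict_mono[OF dn]) (use d in auto)
  moreover have "real (ne2 ?N V) \<le> 2 * real (card ?NE)" using ne2_le[OF fV, of \<Gamma>] by linarith
  then have "4^p * real (ne2 ?N V) \<le> 4^p * (2 * real (card ?NE))" by (rule mult_left_mono) simp
  moreover have "(\<delta> * real n)^2 = \<delta>^2 * (real n)^2" by (simp add: power_mult_distrib)
  ultimately have "\<delta>^2 * (real n)^2 < 2 * 4^p * real (card ?NE)" using c by linarith
  then have "\<delta>^2 / (2 * 4^p) * (real n)^2 < real (card ?NE)"
    by (simp add: field_simps)
  then show "real (f1 \<Gamma>) < real (card (verts \<Gamma>) choose 2) - \<delta>^2 / (2 * 4^p) * real (card (verts \<Gamma>)) ^ 2"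
    using f1_eq[OF sc] unfolding V_def n_def by simp
qed




lemma tri_hom':
  fixes x y z :: nat
  assumes d: "x \<noteq> y" "y \<noteq> z" "x \<noteq> z"
  shows "homology_nonzero TYPE('k::field) {T. T \<subseteq> {x,y,z} \<and> T \<noteq> {x,y,z}} 1"
proof -
  have r: "homology_nonzero TYPE('k) {T. T \<subseteq> {x,y,z} \<and> T \<noteq> {x,y,z}} 1"
    if "{a,b,c} = {x,y,z}" "a < b" "b < c" for a b c :: nat
    using tri_hom[OF that(2,3), where 'k='k] unfolding that(1) .
  consider "x < y" "y < z" | "x < z" "z < y" | "y < x" "x < z" | "y < z" "z < x" | "z < x" "x < y" | "z < y" "y < x"
    using d by linarith
  then show ?thesis
  proof cases
    case 1 then show ?thesis by (intro r[of x y z]) auto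
  next
    case 2 then show ?thesis by (intro r[of x z y]) auto
  next
    case 3 then show ?thesis by (intro r[of y x z]) auto
  next
    case 4 then show ?thesis by (intro r[of y z x]) auto
  next
    case 5 then show ?thesis by (intro r[of z x y]) auto
  next
    case 6 then show ?thesis by (intro r[of z y x]) auto
  qed
qed

lemma cliq_tri:
  assumes sc: "simplicial_complex \<Gamma>" and gi: "girth TYPE('k::field) \<Gamma> 1 > enat 4"
  shows "C \<subseteq> verts \<Gamma> \<Longrightarrow> (\<forall>u\<in>C. \<forall>v\<in>C. u \<noteq> v \<longrightarrow> {u,v} \<in> \<Gamma>) \<Longrightarrow> C \<in> \<Gamma>"
proof (induction "card C" arbitrary: C rule: less_induct)
  case less
  have fC: "finite C" using less.prems(1) sc_verts_finite[OF sc] finite_subset by blast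
  have IH: "D \<in> \<Gamma>" if "D \<subseteq> C" "D \<noteq> C" for D
  proof -
    have "card D < card C" using that fC by (simp add: psubset_card_mono)
    moreover have "D \<subseteq> verts \<Gamma>" using that less.prems(1) by blast
    moreover have "\<forall>u\<in>D. \<forall>v\<in>D. u \<noteq> v \<longrightarrow> {u,v} \<in> \<Gamma>" using that less.prems(2) by blast
    ultimately show ?thesis using less.hyps by blast
  qed
  consider "card C = 0" | "card C = 1" | "card C = 2" | "card C \<ge> 3" by linarith
  then show ?case
  proof cases
    case 1
    then have "C = {}" using fC by simp
    then show ?thesis using sc_empty[OF sc] by simp
  next
    case 2
    then obtain u where u: "C = {u}" using card_1_singletonE by blast
    then have "u \<in> verts \<Gamma>" using less.prems(1) by simp
    then obtain F where "F \<in> \<Gamma>" "u \<in> F" unfolding verts_def by blast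
    then show ?thesis using u sc_sub[OF sc] by blast
  next
    case 3
    then obtain u v where "C = {u,v}" "u \<noteq> v" by (meson card_2_iff)
    then show ?thesis using less.prems(2) by auto
  next
    case 4
    then obtain T where T: "T \<subseteq> C" "card T = 3" by (meson obtain_subset_with_card_n)
    then obtain x y z where xyz: "T = {x,y,z}" "x \<noteq> y" "y \<noteq> z" "x \<noteq> z" by (meson card_3_iff)
    have xyzC: "{x,y,z} \<subseteq> C" using T xyz by simp
    show ?thesis
    proof (rule ccontr)
      assume nC: "C \<notin> \<Gamma>"
      define F where "F = C - {x,y,z}"
      have FG: "F \<in> \<Gamma>" by (rule IH) (use xyzC in \<open>auto simp: F_def\<close>)
      have LK: "induced (link \<Gamma> F) {x,y,z} = {T. T \<subseteq> {x,y,z} \<and> T \<noteq> {x,y,z}}"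
      proof (rule set_eqI, rule iffI)
        fix T assume "T \<in> induced (link \<Gamma> F) {x,y,z}"
        then obtain G where G: "G \<in> \<Gamma>" "F \<subseteq> G" "T = G - F" and Ts: "T \<subseteq> {x,y,z}"
          unfolding induced_def link_def by blast
        have "T \<noteq> {x,y,z}"
        proof
          assume "T = {x,y,z}"
          then have "G = C" using G xyzC unfolding F_def by blast
          then show False using G nC by simp
        qed
        then show "T \<in> {T. T \<subseteq> {x,y,z} \<and> T \<noteq> {x,y,z}}" using Ts by simp
      next
        fix T assume "T \<in> {T. T \<subseteq> {x,y,z} \<and> T \<noteq> {x,y,z}}"
        then have Ts: "T \<subseteq> {x,y,z}" and Tn: "T \<noteq> {x,y,z}" by auto
        have "F \<union> T \<noteq> C"
        proof
          assume e: "F \<union> T = C"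
          have "{x,y,z} \<subseteq> T"
          proof
            fix t assume "t \<in> {x,y,z}"
            then have "t \<in> C" "t \<notin> F" using xyzC F_def by auto
            then show "t \<in> T" using e by blast
          qed
          then show False using Ts Tn by blast
        qed
        moreover have "F \<union> T \<subseteq> C" using Ts xyzC F_def by blast
        ultimately have "F \<union> T \<in> \<Gamma>" using IH by blast
        moreover have "(F \<union> T) - F = T" using Ts F_def by blast
        ultimately have "T \<in> link \<Gamma> F" unfolding link_def by blast
        then show "T \<in> induced (link \<Gamma> F) {x,y,z}" using Ts unfolding induced_def by blast
      qed
      have "homology_nonzero TYPE('k) (induced (link \<Gamma> F) {x,y,z}) 1"
        unfolding LK by (rule tri_hom'[OF xyz(2-4)])
      then have "girth TYPE('k) \<Gamma> 1 \<le> enat (card {x,y,z})"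
        by (rule girth_le[rotated 2]) (use xyzC less.prems(1) FG in auto)
      moreover have "card {x,y,z} \<le> 3" by (simp add: card_insert_if)
      ultimately have "girth TYPE('k) \<Gamma> 1 \<le> enat 3" by (meson enat_ord_simps(1) order_trans)
      with gi have "enat 4 < enat 3" by (rule less_le_trans)
      then show False by simp
    qed
  qed
qed




lemma comatch_mono: assumes "comatch N S k" "S \<subseteq> S'" shows "comatch N S' k"
proof -
  obtain a b where "\<forall>i<k. a i \<in> S \<and> b i \<in> S \<and> N (a i) (b i)"
    "\<forall>i<k. \<forall>j<k. i \<noteq> j \<longrightarrow> \<not> N (a i) (a j) \<and> \<not> N (a i) (b j) \<and> \<not> N (b i) (b j)
        \<and> a i \<noteq> a j \<and> a i \<noteq> b j \<and> b i \<noteq> b j" using assms(1) unfolding comatch_def by blast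
  then show ?thesis unfolding comatch_def using assms(2) by blast
qed

lemma comatch2:
  assumes "a0 \<in> S" "b0 \<in> S" "a1 \<in> S" "b1 \<in> S" "N a0 b0" "N a1 b1"
    "\<not> N a0 a1" "\<not> N a1 a0" "\<not> N a0 b1" "\<not> N a1 b0" "\<not> N b0 b1" "\<not> N b1 b0"
    "a0 \<noteq> a1" "a0 \<noteq> b1" "a1 \<noteq> b0" "b0 \<noteq> b1"
  shows "comatch N S 2"
  unfolding comatch_def
proof (intro exI conjI)
  let ?a = "\<lambda>i::nat. if i = 0 then a0 else a1" and ?b = "\<lambda>i::nat. if i = 0 then b0 else b1"
  show "\<forall>i<2. ?a i \<in> S \<and> ?b i \<in> S \<and> N (?a i) (?b i)" using assms by auto
  show "\<forall>i<2. \<forall>j<2. i \<noteq> j \<longrightarrow> \<not> N (?a i) (?a j) \<and> \<not> N (?a i) (?b j) \<and> \<not> N (?b i) (?b j)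
        \<and> ?a i \<noteq> ?a j \<and> ?a i \<noteq> ?b j \<and> ?b i \<noteq> ?b j"
  proof (intro allI impI)
    fix i j :: nat assume "i < 2" "j < 2" "i \<noteq> j"
    then have "(i = 0 \<and> j = 1) \<or> (i = 1 \<and> j = 0)" by auto
    then show "\<not> N (?a i) (?a j) \<and> \<not> N (?a i) (?b j) \<and> \<not> N (?b i) (?b j)
        \<and> ?a i \<noteq> ?a j \<and> ?a i \<noteq> ?b j \<and> ?b i \<noteq> ?b j" using assms by auto
  qed
qed

lemma common_clique:
  assumes ncm: "\<not> comatch (\<lambda>u v. u \<noteq> v \<and> {u,v} \<notin> \<Gamma>) V 2"
    and x: "x \<in> V" and y: "y \<in> V" and xy: "x \<noteq> y" "{x,y} \<notin> \<Gamma>"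
    and u: "u \<in> V" "u \<noteq> x" "{u,x} \<in> \<Gamma>" "u \<noteq> y" "{u,y} \<in> \<Gamma>"
    and u': "u' \<in> V" "u' \<noteq> x" "{u',x} \<in> \<Gamma>" "u' \<noteq> y" "{u',y} \<in> \<Gamma>"
    and uu: "u \<noteq> u'"
  shows "{u,u'} \<in> \<Gamma>"
proof (rule ccontr)
  assume "{u,u'} \<notin> \<Gamma>"
  then have "comatch (\<lambda>u v. u \<noteq> v \<and> {u,v} \<notin> \<Gamma>) V 2"
    by (intro comatch2[of x V y u u']) (use x y xy u u' uu in \<open>auto simp: insert_commute\<close>)
  then show False using ncm by simp
qed




lemma sumQ_le:
  assumes sc: "simplicial_complex \<Gamma>" and fV: "finite V" and VV: "V = verts \<Gamma>"
    and ncm: "\<not> comatch (\<lambda>u v. u \<noteq> v \<and> {u,v} \<notin> \<Gamma>) V 2"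
    and cliq: "\<And>C. C \<subseteq> verts \<Gamma> \<Longrightarrow> (\<forall>u\<in>C. \<forall>v\<in>C. u \<noteq> v \<longrightarrow> {u,v} \<in> \<Gamma>) \<Longrightarrow> C \<in> \<Gamma>"
  shows "(\<Sum>v\<in>V. ne2 (\<lambda>u v. u \<noteq> v \<and> {u,v} \<notin> \<Gamma>) {u \<in> V. u \<noteq> v \<and> {v,u} \<in> \<Gamma>})
     \<le> card V * card V * cdim \<Gamma>"
proof -
  define N where "N = (\<lambda>u v. u \<noteq> v \<and> {u,v} \<notin> \<Gamma>)"
  define Nb where "Nb v = {u \<in> V. u \<noteq> v \<and> {v,u} \<in> \<Gamma>}" for v
  define Qs where "Qs v = {(x,y). x \<in> Nb v \<and> y \<in> Nb v \<and> N x y}" for v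
  define Cm where "Cm q = {v \<in> V. v \<noteq> fst q \<and> {v, fst q} \<in> \<Gamma> \<and> v \<noteq> snd q \<and> {v, snd q} \<in> \<Gamma> \<and> N (fst q) (snd q)}" for q
  have fQs: "finite (Qs v)" for v
    unfolding Qs_def by (rule finite_subset[of _ "V \<times> V"]) (use fV in \<open>auto simp: Nb_def\<close>)
  have "(\<Sum>v\<in>V. ne2 N (Nb v)) = (\<Sum>v\<in>V. card (Qs v))" unfolding ne2_def Qs_def by simp
  also have "\<dots> = card (Sigma V Qs)" by (rule card_SigmaI[symmetric]) (use fV fQs in auto)
  also have "\<dots> \<le> card (Sigma (V \<times> V) Cm)"
  proof (rule card_inj_on_le)
    show "inj_on (\<lambda>(v,q). (q,v)) (Sigma V Qs)" by (rule inj_onI) auto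
    show "(\<lambda>(v,q). (q,v)) ` Sigma V Qs \<subseteq> Sigma (V \<times> V) Cm"
      unfolding Qs_def Cm_def Nb_def by (auto simp: insert_commute)
    show "finite (Sigma (V \<times> V) Cm)"
      by (rule finite_SigmaI) (use fV in \<open>auto simp: Cm_def\<close>)
  qed
  also have "\<dots> = (\<Sum>q\<in>V \<times> V. card (Cm q))" by (rule card_SigmaI) (use fV in \<open>auto simp: Cm_def\<close>)
  also have "\<dots> \<le> card (V \<times> V) * cdim \<Gamma>"
  proof -
    have "card (Cm q) \<le> cdim \<Gamma>" if q: "q \<in> V \<times> V" for q
    proof (cases "N (fst q) (snd q)")
      case False
      then have "Cm q = {}" unfolding Cm_def by auto
      then show ?thesis by simp
    next
      case True
      have "\<forall>u\<in>Cm q. \<forall>u'\<in>Cm q. u \<noteq> u' \<longrightarrow> {u,u'} \<in> \<Gamma>"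
      proof (intro ballI impI)
        fix u u' assume u: "u \<in> Cm q" and u': "u' \<in> Cm q" and uu: "u \<noteq> u'"
        show "{u,u'} \<in> \<Gamma>"
          by (rule common_clique[OF ncm, of "fst q" "snd q"]) (use q True u u' uu in \<open>auto simp: Cm_def N_def\<close>)
      qed
      moreover have "Cm q \<subseteq> verts \<Gamma>" unfolding Cm_def VV by auto
      ultimately have "Cm q \<in> \<Gamma>" using cliq by blast
      then show ?thesis by (rule face_card[OF sc])
    qed
    then show ?thesis using sum_bounded_above[of "V \<times> V" "\<lambda>q. card (Cm q)" "cdim \<Gamma>"] by simp
  qed
  also have "\<dots> = card V * card V * cdim \<Gamma>" by (simp add: card_cartesian_product)
  finally show ?thesis unfolding N_def Nb_def .
qed




lemma part2:
  assumes e: "(\<epsilon>'::real) > 0"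
  shows "\<exists>\<delta>'::real. \<delta>' > 0 \<and>
               (\<forall>\<Gamma>::nat set set. simplicial_complex \<Gamma> \<and>
                   girth TYPE('k::field) \<Gamma> 1 > enat 4 \<and>
                   real (cdim \<Gamma>) < \<delta>' * real (card (verts \<Gamma>)) \<longrightarrow>
                   real (f1 \<Gamma>) < \<epsilon>' * real (card (verts \<Gamma>)) ^ 2)"
proof (intro exI conjI allI impI)
  show "min (\<epsilon>'/4) (\<epsilon>'^2/256) > 0" using e by simp
  fix \<Gamma> :: "nat set set"
  assume H: "simplicial_complex \<Gamma> \<and> girth TYPE('k::field) \<Gamma> 1 > enat 4 \<and>
                   real (cdim \<Gamma>) < min (\<epsilon>'/4) (\<epsilon>'^2/256) * real (card (verts \<Gamma>))"
  then have sc: "simplicial_complex \<Gamma>" and gi: "girth TYPE('k) \<Gamma> 1 > enat 4"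
    and cd: "real (cdim \<Gamma>) < min (\<epsilon>'/4) (\<epsilon>'^2/256) * real (card (verts \<Gamma>))" by auto
  define V where "V = verts \<Gamma>"
  define n where "n = card V"
  define w where "w = cdim \<Gamma>"
  let ?N = "\<lambda>u v. u \<noteq> v \<and> {u,v} \<notin> \<Gamma>"
  define Nb where "Nb v = {u \<in> V. u \<noteq> v \<and> {v,u} \<in> \<Gamma>}" for v
  define d where "d v = card (Nb v)" for v
  define Q where "Q v = ne2 ?N (Nb v)" for v
  define \<alpha> where "\<alpha> = \<epsilon>'/2"
  have fV: "finite V" using sc_verts_finite[OF sc] V_def by simp
  have cliq: "\<And>C. C \<subseteq> verts \<Gamma> \<Longrightarrow> (\<forall>u\<in>C. \<forall>v\<in>C. u \<noteq> v \<longrightarrow> {u,v} \<in> \<Gamma>) \<Longrightarrow> C \<in> \<Gamma>"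
    by (erule (1) cliq_tri[OF sc gi])
  have ncm: "\<not> comatch ?N V 2"
  proof
    assume "comatch ?N V 2"
    then have "comatch ?N (verts \<Gamma>) 2" unfolding V_def .
    moreover have two: "(2::nat) \<ge> 1" by simp
    ultimately have "girth TYPE('k) \<Gamma> (2 - 1) \<le> enat (2 * 2)" using core[where 'k='k, OF sc _ two] cliq by blast
    then have "girth TYPE('k) \<Gamma> 1 \<le> enat 4" by simp
    with gi have "enat 4 < enat 4" by (rule less_le_trans)
    then show False by simp
  qed
  have cl: "\<forall>C\<subseteq>V. (\<forall>u\<in>C. \<forall>v\<in>C. \<not> ?N u v) \<longrightarrow> card C \<le> w"
  proof (intro allI impI)
    fix C assume C: "C \<subseteq> V" and nn: "\<forall>u\<in>C. \<forall>v\<in>C. \<not> ?N u v"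
    have "C \<in> \<Gamma>" by (rule cliq) (use C nn V_def in auto)
    then show "card C \<le> w" unfolding w_def by (rule face_card[OF sc])
  qed
  have w0: "real w \<ge> 0" by simp
  have cd': "real w < min (\<epsilon>'/4) (\<epsilon>'^2/256) * real n" using cd unfolding w_def n_def V_def .
  have npos: "real n > 0"
  proof (rule ccontr)
    assume "\<not> real n > 0" then have "real n = 0" by simp
    then show False using cd' w0 by simp
  qed
  have "min (\<epsilon>'/4) (\<epsilon>'^2/256) * real n \<le> \<epsilon>'/4 * real n"
    by (rule mult_right_mono) (use npos in auto)
  then have hw1: "real w < \<epsilon>'/4 * real n" using cd' by linarith
  have "min (\<epsilon>'/4) (\<epsilon>'^2/256) * real n \<le> \<epsilon>'^2/256 * real n"
    by (rule mult_right_mono) (use npos in auto)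
  then have hw2: "real w < \<epsilon>'^2/256 * real n" using cd' by linarith
  show "real (f1 \<Gamma>) < \<epsilon>' * real (card (verts \<Gamma>)) ^ 2"
  proof (rule ccontr)
    assume "\<not> real (f1 \<Gamma>) < \<epsilon>' * real (card (verts \<Gamma>)) ^ 2"
    then have F: "\<epsilon>' * real n ^ 2 \<le> real (f1 \<Gamma>)" unfolding n_def V_def by simp
    define P where "P = {(x,y). x \<in> V \<and> y \<in> V \<and> x \<noteq> y \<and> {x,y} \<in> \<Gamma>}"
    have fP: "finite P" unfolding P_def by (rule finite_subset[of _ "V \<times> V"]) (use fV in auto)
    have "{F \<in> \<Gamma>. card F = 2} \<subseteq> (\<lambda>(x,y). {x,y}) ` P"
    proof
      fix F assume "F \<in> {F \<in> \<Gamma>. card F = 2}"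
      then have FG: "F \<in> \<Gamma>" and c2: "card F = 2" by auto
      obtain x y where xy: "F = {x,y}" "x \<noteq> y" using c2 by (meson card_2_iff)
      have "F \<subseteq> V" using face_verts[OF FG] V_def by simp
      then have "(x,y) \<in> P" using xy FG unfolding P_def by auto
      then show "F \<in> (\<lambda>(x,y). {x,y}) ` P" using xy by force
    qed
    then have "f1 \<Gamma> \<le> card ((\<lambda>(x,y). {x,y}) ` P)" unfolding f1_def
      by (rule card_mono[OF finite_imageI[OF fP]])
    also have "\<dots> \<le> card P" by (rule card_image_le[OF fP])
    also have "P = Sigma V Nb" unfolding P_def Nb_def by auto
    also have "card (Sigma V Nb) = (\<Sum>v\<in>V. d v)" unfolding d_def
      by (rule card_SigmaI) (use fV in \<open>auto simp: Nb_def\<close>)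
    finally have "f1 \<Gamma> \<le> (\<Sum>v\<in>V. d v)" .
    then have "real (f1 \<Gamma>) \<le> (\<Sum>v\<in>V. real (d v))" by (metis of_nat_le_iff of_nat_sum)
    then have Sd: "\<epsilon>' * real n ^ 2 \<le> (\<Sum>v\<in>V. real (d v))" using F by linarith
    define Hi where "Hi = {v \<in> V. \<alpha> * real n \<le> real (d v)}"
    have hiQ: "real (d v)^2 \<le> 64 * real (Q v)" if v: "v \<in> Hi" for v
    proof -
      have NbV: "Nb v \<subseteq> V" unfolding Nb_def by auto
      have fN: "finite (Nb v)" using fV NbV finite_subset by blast
      have clN: "\<forall>C\<subseteq>Nb v. (\<forall>u\<in>C. \<forall>u'\<in>C. \<not> ?N u u') \<longrightarrow> card C \<le> w" 
      proof (intro allI impI)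
        fix C assume "C \<subseteq> Nb v" "\<forall>u\<in>C. \<forall>u'\<in>C. \<not> ?N u u'"
        then show "card C \<le> w" using cl NbV by blast
      qed
      have ncN: "\<not> comatch ?N (Nb v) 2"
      proof
        assume "comatch ?N (Nb v) 2"
        then have "comatch ?N V 2" by (rule comatch_mono[OF _ NbV])
        then show False using ncm by simp
      qed
      have dv: "\<alpha> * real n \<le> real (d v)" using v Hi_def by simp
      have wd: "real w \<le> real (d v) / 2" using hw1 dv unfolding \<alpha>_def by simp
      have "(real (card (Nb v)) - real w)^2 \<le> 4^2 * real (ne2 ?N (Nb v))"
        by (rule claim[OF _ _ fN clN ncN]) (use wd w0 d_def in \<open>auto simp: insert_commute\<close>)
      then have c: "(real (d v) - real w)^2 \<le> 16 * real (Q v)" unfolding d_def Q_def by simp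
      have "(real (d v) / 2)^2 \<le> (real (d v) - real w)^2" by (rule power_mono) (use wd in auto)
      moreover have "(real (d v) / 2)^2 = real (d v)^2 / 4" by (simp add: power_divide)
      ultimately show ?thesis using c by linarith
    qed
    have HiV: "Hi \<subseteq> V" unfolding Hi_def by auto
    have "(\<Sum>v\<in>V. real (d v)) = (\<Sum>v\<in>Hi. real (d v)) + (\<Sum>v\<in>V - Hi. real (d v))"
      using sum.subset_diff[OF HiV fV, of "\<lambda>v. real (d v)"] by linarith
    moreover have "(\<Sum>v\<in>V - Hi. real (d v)) \<le> real (card (V - Hi)) * (\<alpha> * real n)"
      by (rule sum_bounded_above) (auto simp: Hi_def)
    moreover have "real (card (V - Hi)) * (\<alpha> * real n) \<le> real n * (\<alpha> * real n)"
    proof (rule mult_right_mono)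
      show "real (card (V - Hi)) \<le> real n" unfolding n_def using fV by (simp add: card_mono)
      show "0 \<le> \<alpha> * real n" using e npos \<alpha>_def by simp
    qed
    ultimately have SH: "\<alpha> * real n ^ 2 \<le> (\<Sum>v\<in>Hi. real (d v))"
      using Sd unfolding \<alpha>_def by (simp add: power2_eq_square algebra_simps)
    have "(\<Sum>v\<in>Hi. \<alpha> * real n * real (d v)) \<le> (\<Sum>v\<in>Hi. real (d v)^2)"
    proof (rule sum_mono)
      fix v assume "v \<in> Hi"
      then have "\<alpha> * real n \<le> real (d v)" unfolding Hi_def by simp
      then show "\<alpha> * real n * real (d v) \<le> real (d v)^2" by (simp add: power2_eq_square mult_right_mono)
    qed
    moreover have "(\<Sum>v\<in>Hi. \<alpha> * real n * real (d v)) = \<alpha> * real n * (\<Sum>v\<in>Hi. real (d v))"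
      by (simp add: sum_distrib_left)
    moreover have "\<alpha> * real n * (\<alpha> * real n ^ 2) \<le> \<alpha> * real n * (\<Sum>v\<in>Hi. real (d v))"
      by (rule mult_left_mono[OF SH]) (use e npos \<alpha>_def in simp)
    ultimately have SH2: "\<alpha>^2 * real n ^ 3 \<le> (\<Sum>v\<in>Hi. real (d v)^2)"
      by (simp add: power2_eq_square power3_eq_cube algebra_simps)
    have "(\<Sum>v\<in>Hi. real (d v)^2) \<le> (\<Sum>v\<in>Hi. 64 * real (Q v))" by (rule sum_mono) (rule hiQ)
    also have "\<dots> = 64 * (\<Sum>v\<in>Hi. real (Q v))" by (simp add: sum_distrib_left)
    also have "(\<Sum>v\<in>Hi. real (Q v)) \<le> (\<Sum>v\<in>V. real (Q v))"
      by (rule sum_mono2[OF fV HiV]) simp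
    finally have low: "\<alpha>^2 * real n ^ 3 \<le> 64 * (\<Sum>v\<in>V. real (Q v))" using SH2 by linarith
    have "(\<Sum>v\<in>V. Q v) \<le> card V * card V * cdim \<Gamma>"
      unfolding Q_def Nb_def by (rule sumQ_le[OF sc fV V_def ncm cliq])
    then have "(\<Sum>v\<in>V. real (Q v)) \<le> real n * real n * real w" unfolding n_def w_def
      by (metis of_nat_le_iff of_nat_mult of_nat_sum)
    also have "\<dots> < real n * real n * (\<epsilon>'^2/256 * real n)"
      by (rule mult_strict_left_mono[OF hw2]) (use npos in simp)
    finally have up: "(\<Sum>v\<in>V. real (Q v)) < \<epsilon>'^2/256 * real n ^ 3"
      by (simp add: power3_eq_cube algebra_simps)
    have "\<epsilon>'^2/256 * real n ^ 3 = (\<alpha>^2 * real n ^ 3) / 64" unfolding \<alpha>_def by (simp add: power_divide)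
    then show False using low up by linarith
  qed
qed


theorem mainTheorem5:
  shows "(\<forall>(p::nat) (\<delta>::real). p \<ge> 1 \<and> \<delta> > 0 \<longrightarrow>
            (\<exists>\<epsilon>::real. \<epsilon> > 0 \<and>
               (\<forall>\<Gamma>::nat set set. simplicial_complex \<Gamma> \<and> flag \<Gamma> \<and>
                   girth TYPE('k::field) \<Gamma> (p - 1) > enat (2 * p) \<and>
                   real (cdim \<Gamma>) < (1 - \<delta>) * real (card (verts \<Gamma>)) \<longrightarrow>
                   real (f1 \<Gamma>) < real (card (verts \<Gamma>) choose 2) - \<epsilon> * real (card (verts \<Gamma>)) ^ 2)))
       \<and> (\<forall>\<epsilon>'::real. \<epsilon>' > 0 \<longrightarrow>
            (\<exists>\<delta>'::real. \<delta>' > 0 \<and>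
               (\<forall>\<Gamma>::nat set set. simplicial_complex \<Gamma> \<and>
                   girth TYPE('k) \<Gamma> 1 > enat 4 \<and>
                   real (cdim \<Gamma>) < \<delta>' * real (card (verts \<Gamma>)) \<longrightarrow>
                   real (f1 \<Gamma>) < \<epsilon>' * real (card (verts \<Gamma>)) ^ 2)))"
proof (intro conjI allI impI)
  fix p :: nat and \<delta> :: real
  assume "p \<ge> 1 \<and> \<delta> > 0"
  then show "\<exists>\<epsilon>::real. \<epsilon> > 0 \<and>
               (\<forall>\<Gamma>::nat set set. simplicial_complex \<Gamma> \<and> flag \<Gamma> \<and>
                   girth TYPE('k::field) \<Gamma> (p - 1) > enat (2 * p) \<and>
                   real (cdim \<Gamma>) < (1 - \<delta>) * real (card (verts \<Gamma>)) \<longrightarrow>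
                   real (f1 \<Gamma>) < real (card (verts \<Gamma>) choose 2) - \<epsilon> * real (card (verts \<Gamma>)) ^ 2)"
    using part1[where 'k='k] by blast
next
  fix \<epsilon>' :: real
  assume "\<epsilon>' > 0"
  then show "\<exists>\<delta>'::real. \<delta>' > 0 \<and>
               (\<forall>\<Gamma>::nat set set. simplicial_complex \<Gamma> \<and>
                   girth TYPE('k) \<Gamma> 1 > enat 4 \<and>
                   real (cdim \<Gamma>) < \<delta>' * real (card (verts \<Gamma>)) \<longrightarrow>
                   real (f1 \<Gamma>) < \<epsilon>' * real (card (verts \<Gamma>)) ^ 2)"
    using part2[where 'k='k] by blast
qed

end
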